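(* Let $X=\{X_t\}_{t=0}^T$ be a state process with $X_0\in\mathring{\mathcal{X}}_R$ and $X_{t+1}=S(X_t,a_t,\varepsilon_{t+1})$, $t=0,\dots,T-1$, where ${\sf a}=\{a_t\}_{t=0}^{T-1}$ is any $\{\mathcal{F}_t\}$-adapted process. Define $\tau^R=\inf\{t\in\{0,\dots,T\}: X_t\notin\mathring{\mathcal{X}}_R\}$ (with $\inf\emptyset=\infty$), and $X_0^R=X_0$, $X_t^R=X_t\mathbb{I}_{\{\tau^R>t\}}+\mathcal{Q}(X_{\tau^R\wedge t})\mathbb{I}_{\{\tau^R\le t\}}$ for $t=1,\dots,T$. Then: (i) $\{\tau^R\le t\}=\{X_t^R\in\partial\mathcal{X}_R\}$ for $t=1,2,\dots,T$; (ii) $\{\tau^R=t+1\}=\{X_t^R\in\mathring{\mathcal{X}}_R,\ S(X_t^R,a_t,\varepsilon_{t+1})\notin\mathring{\mathcal{X}}_R\}$ for $t=0,1,\dots,T-1$.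
   Context: $(\Omega,\mathcal{F},\mathbb{P})$ is a probability space with filtration $\{\mathcal{F}_t\}_{t=0}^T$; $\varepsilon_1,\dots,\varepsilon_T$ are independent $\mathbb{R}^q$-valued random variables; $S:\mathbb{R}^d\times\mathbb{R}^p\times\mathbb{R}^q\to\mathbb{R}^d$ is measurable and $X$ takes values in $\mathcal{X}\subseteq\mathbb{R}^d$. $\mathcal{X}_R\subseteq\mathcal{X}$ is a bounded set with interior $\mathring{\mathcal{X}}_R$, boundary $\partial\mathcal{X}_R$, and compact strictly convex closure $\mathrm{cl}(\mathcal{X}_R)$; $\mathcal{Q}(x)=\arg\inf_{y\in\mathrm{cl}(\mathcal{X}_R)}\|y-x\|$ is the Euclidean nearest-point projection onto $\mathrm{cl}(\mathcal{X}_R)$, which lies in $\partial\mathcal{X}_R$ for $x\notin\mathring{\mathcal{X}}_R$. *)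

theory Defs
  imports "HOL-Analysis.Analysis" "HOL-Probability.Probability" "HOL-Library.Extended_Nat"
begin

definition strictly_convex :: "'a::real_normed_vector set \<Rightarrow> bool" where
  "strictly_convex S \<longleftrightarrow>
     (\<forall>x\<in>S. \<forall>y\<in>S. x \<noteq> y \<longrightarrow> (\<forall>u::real. 0 < u \<and> u < 1 \<longrightarrow> (1 - u) *\<^sub>R x + u *\<^sub>R y \<in> interior S))"

definition projQ :: "'a::euclidean_space set \<Rightarrow> 'a \<Rightarrow> 'a" where
  "projQ XR x = closest_point (closure XR) x"

text \<open>Exit time tau^R (infimum in enat, Inf {} = \<infinity>).\<close>
definition tauR :: "'a::euclidean_space set \<Rightarrow> nat \<Rightarrow> (nat \<Rightarrow> 'w \<Rightarrow> 'a) \<Rightarrow> 'w \<Rightarrow> enat" where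
  "tauR XR T X \<omega> = Inf {enat t | t. t \<le> T \<and> X t \<omega> \<notin> interior XR}"

definition XRproc :: "'a::euclidean_space set \<Rightarrow> nat \<Rightarrow> (nat \<Rightarrow> 'w \<Rightarrow> 'a) \<Rightarrow> nat \<Rightarrow> 'w \<Rightarrow> 'a" where
  "XRproc XR T X t \<omega> =
     (if t = 0 then X 0 \<omega>
      else if enat t < tauR XR T X \<omega> then X t \<omega>
      else projQ XR (X (the_enat (min (tauR XR T X \<omega>) (enat t))) \<omega>))"

end

theory Submission
  imports Defs
begin

lemma projQ_frontier:
  fixes XR :: "'a::euclidean_space set"
  assumes ne: "interior XR \<noteq> {}" and x: "x \<notin> interior XR"
  shows "projQ XR x \<in> frontier XR"
proof -
  have ic: "interior (closure XR) \<noteq> {}" using ne interior_mono closure_subset by blast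
  have cne: "closure XR \<noteq> {}" using ic interior_subset[of "closure XR"] by auto
  have ah: "affine hull (closure XR) = UNIV" using affine_hull_nonempty_interior[OF ic] .
  have ri: "rel_interior (closure XR) = interior (closure XR)" using rel_interior_nonempty_interior[OF ic] .
  have inS: "projQ XR x \<in> closure XR" unfolding projQ_def
    using closest_point_in_set[OF closed_closure cne] .
  show ?thesis
  proof (cases "x \<in> closure XR")
    case True
    then have "projQ XR x = x" unfolding projQ_def using closest_point_self by blast
    then show ?thesis using True x by (simp add: frontier_def)
  next
    case False
    then have "x \<notin> interior (closure XR)" using interior_subset by blast
    then have "projQ XR x \<notin> interior (closure XR)"
      using closest_point_in_rel_interior[OF closed_closure cne, of x] ah ri unfolding projQ_def by simp
    then have "projQ XR x \<notin> interior XR"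
      using interior_mono closure_subset by blast
    then show ?thesis using inS by (simp add: frontier_def)
  qed
qed

lemma tau_le_iff:
  "tauR XR T X \<omega> \<le> enat t \<longleftrightarrow> (\<exists>s\<le>t. s \<le> T \<and> X s \<omega> \<notin> interior XR)"
proof
  assume "tauR XR T X \<omega> \<le> enat t"
  show "\<exists>s\<le>t. s \<le> T \<and> X s \<omega> \<notin> interior XR"
  proof (rule ccontr)
    assume "\<not> ?thesis"
    then have "enat (Suc t) \<le> tauR XR T X \<omega>" unfolding tauR_def
      by (force intro!: Inf_greatest)
    from order_trans[OF this \<open>tauR XR T X \<omega> \<le> enat t\<close>] show False by simp
  qed
next
  assume "\<exists>s\<le>t. s \<le> T \<and> X s \<omega> \<notin> interior XR"
  then obtain s where "s \<le> t" "s \<le> T" "X s \<omega> \<notin> interior XR" by blast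
  then have "tauR XR T X \<omega> \<le> enat s" unfolding tauR_def by (force intro!: Inf_lower)
  with \<open>s \<le> t\<close> show "tauR XR T X \<omega> \<le> enat t" by (meson enat_ord_simps(1) order_trans)
qed

lemma tau_val:
  assumes "tauR XR T X \<omega> \<le> enat t"
  obtains k where "tauR XR T X \<omega> = enat k" "k \<le> t" "k \<le> T" "X k \<omega> \<notin> interior XR"
proof -
  have "tauR XR T X \<omega> \<noteq> \<infinity>" using assms by (metis enat_ord_simps(5) infinity_ileE)
  then obtain k where k: "tauR XR T X \<omega> = enat k" by blast
  then have kt: "k \<le> t" using assms by simp
  have "tauR XR T X \<omega> \<le> enat k" using k by simp
  then obtain s where s: "s \<le> k" "s \<le> T" "X s \<omega> \<notin> interior XR"
    using tau_le_iff[of XR T X \<omega> k] by blast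
  then have "tauR XR T X \<omega> \<le> enat s" using tau_le_iff[of XR T X \<omega> s] by blast
  with k s(1) have "s = k" by simp
  with s k kt that show ?thesis by blast
qed

lemma XR_int:
  assumes "t \<le> T" "\<not> tauR XR T X \<omega> \<le> enat t"
  shows "XRproc XR T X t \<omega> = X t \<omega> \<and> X t \<omega> \<in> interior XR"
proof -
  have "X t \<omega> \<in> interior XR" using assms tau_le_iff[of XR T X \<omega> t] by auto
  moreover have "enat t < tauR XR T X \<omega>" using assms(2) by simp
  ultimately show ?thesis unfolding XRproc_def by simp
qed

lemma XR_front:
  assumes ne: "interior XR \<noteq> {}" and "1 \<le> t" "tauR XR T X \<omega> \<le> enat t"
  shows "XRproc XR T X t \<omega> \<in> frontier XR"
proof -
  obtain k where k: "tauR XR T X \<omega> = enat k" "k \<le> t" "X k \<omega> \<notin> interior XR"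
    using tau_val[OF assms(3)] by metis
  have "XRproc XR T X t \<omega> = projQ XR (X k \<omega>)"
    unfolding XRproc_def using k assms(2) by (simp add: min_def)
  then show ?thesis using projQ_frontier[OF ne k(3)] by simp
qed

theorem lemma1:
  fixes M :: "'w measure" and F :: "nat \<Rightarrow> 'w measure"
    and T :: nat
    and S :: "real^'d \<Rightarrow> real^'p \<Rightarrow> real^'q \<Rightarrow> real^'d"
    and X :: "nat \<Rightarrow> 'w \<Rightarrow> real^'d"
    and a :: "nat \<Rightarrow> 'w \<Rightarrow> real^'p"
    and eps :: "nat \<Rightarrow> 'w \<Rightarrow> real^'q"
    and \<X> XR :: "(real^'d) set"
  assumes prob: "prob_space M"
    and filt: "filtration (space M) F"
    and filt_sub: "\<And>t. sets (F t) \<subseteq> sets M"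
    and eps_rv: "\<And>t. t \<in> {1..T} \<Longrightarrow> eps t \<in> borel_measurable M"
    and eps_indep: "prob_space.indep_vars M (\<lambda>_. borel) eps {1..T}"
    and S_meas: "(\<lambda>(x, u, e). S x u e) \<in> borel_measurable borel"
    and a_adapted: "\<And>t. t < T \<Longrightarrow> a t \<in> borel_measurable (F t)"
    and X_vals: "\<And>t \<omega>. t \<le> T \<Longrightarrow> \<omega> \<in> space M \<Longrightarrow> X t \<omega> \<in> \<X>"
    and XR_sub: "XR \<subseteq> \<X>"
    and XR_bdd: "bounded XR"
    and cl_compact: "compact (closure XR)"
    and cl_sconv: "strictly_convex (closure XR)"
    and X0: "\<And>\<omega>. \<omega> \<in> space M \<Longrightarrow> X 0 \<omega> \<in> interior XR"
    and dyn: "\<And>t \<omega>. t < T \<Longrightarrow> \<omega> \<in> space M \<Longrightarrow> X (Suc t) \<omega> = S (X t \<omega>) (a t \<omega>) (eps (Suc t) \<omega>)"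
  shows "(\<forall>t\<in>{1..T}. {\<omega> \<in> space M. tauR XR T X \<omega> \<le> enat t}
                     = {\<omega> \<in> space M. XRproc XR T X t \<omega> \<in> frontier XR})
       \<and> (\<forall>t<T. {\<omega> \<in> space M. tauR XR T X \<omega> = enat (Suc t)}
                     = {\<omega> \<in> space M. XRproc XR T X t \<omega> \<in> interior XR
                          \<and> S (XRproc XR T X t \<omega>) (a t \<omega>) (eps (Suc t) \<omega>) \<notin> interior XR})"
  proof -
  have sne: "space M \<noteq> {}" using prob prob_space.not_empty by blast
  then obtain w0 where "w0 \<in> space M" by blast
  then have ne: "interior XR \<noteq> {}" using X0 by blast
  have fi: "interior XR \<inter> frontier XR = {}" by (auto simp: frontier_def)
  have P1: "{\<omega> \<in> space M. tauR XR T X \<omega> \<le> enat t}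
                     = {\<omega> \<in> space M. XRproc XR T X t \<omega> \<in> frontier XR}" if t: "t \<in> {1..T}" for t
  proof (intro Collect_cong conj_cong refl)
    fix \<omega> show "(tauR XR T X \<omega> \<le> enat t) = (XRproc XR T X t \<omega> \<in> frontier XR)"
    proof (cases "tauR XR T X \<omega> \<le> enat t")
      case True then show ?thesis using XR_front[OF ne, of t] t by auto
    next
      case False then show ?thesis using XR_int[of t T XR X \<omega>] t fi by auto
    qed
  qed
  have P2: "{\<omega> \<in> space M. tauR XR T X \<omega> = enat (Suc t)}
                     = {\<omega> \<in> space M. XRproc XR T X t \<omega> \<in> interior XR
                          \<and> S (XRproc XR T X t \<omega>) (a t \<omega>) (eps (Suc t) \<omega>) \<notin> interior XR}"
    if t: "t < T" for t
  proof (intro Collect_cong conj_cong refl)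
    fix \<omega> assume w: "\<omega> \<in> space M"
    show "(tauR XR T X \<omega> = enat (Suc t)) = (XRproc XR T X t \<omega> \<in> interior XR
                          \<and> S (XRproc XR T X t \<omega>) (a t \<omega>) (eps (Suc t) \<omega>) \<notin> interior XR)"
    proof (cases "tauR XR T X \<omega> \<le> enat t")
      case True
      have "t \<noteq> 0"
      proof
        assume "t = 0"
        then show False using True tau_le_iff[of XR T X \<omega> t] X0[OF w] by auto
      qed
      then have "XRproc XR T X t \<omega> \<in> frontier XR" using XR_front[OF ne, of t] True by auto
      then have "XRproc XR T X t \<omega> \<notin> interior XR" using fi by blast
      moreover have "tauR XR T X \<omega> \<noteq> enat (Suc t)" using True by auto
      ultimately show ?thesis by simp
    next
      case False
      have xr: "XRproc XR T X t \<omega> = X t \<omega>" "X t \<omega> \<in> interior XR"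
        using XR_int[of t T XR X \<omega>] t False by auto
      have Sx: "S (X t \<omega>) (a t \<omega>) (eps (Suc t) \<omega>) = X (Suc t) \<omega>" using dyn[OF t w] by simp
      have "(tauR XR T X \<omega> = enat (Suc t)) = (X (Suc t) \<omega> \<notin> interior XR)"
      proof
        assume h: "tauR XR T X \<omega> = enat (Suc t)"
        then have "tauR XR T X \<omega> \<le> enat (Suc t)" by simp
        then obtain s where s: "s \<le> Suc t" "s \<le> T" "X s \<omega> \<notin> interior XR"
          using tau_le_iff[of XR T X \<omega> "Suc t"] by blast
        have "\<not> s \<le> t" using False s tau_le_iff[of XR T X \<omega> t] by blast
        then show "X (Suc t) \<omega> \<notin> interior XR" using s by (metis le_SucE)
      next
        assume h: "X (Suc t) \<omega> \<notin> interior XR"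
        then have "tauR XR T X \<omega> \<le> enat (Suc t)" using tau_le_iff[of XR T X \<omega> "Suc t"] t by auto
        then obtain k where k: "tauR XR T X \<omega> = enat k" "k \<le> Suc t" using tau_val by metis
        then have "\<not> k \<le> t" using False by auto
        then show "tauR XR T X \<omega> = enat (Suc t)" using k by simp
      qed
      then show ?thesis using xr Sx by simp
    qed
  qed
  show ?thesis using P1 P2 by blast
qed


end
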